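(* Let $X$, $(S_n)$ be as in the context and assume Assumption (A) holds. Let $\nu\in \mathcal M_+(W_S)$ be a quasi-stationary distribution such that $\nu(\eta_S)>0$ and such that $\nu\{x:\ j_S(x)\leq \ell\}=1$ for some $\ell\geq 0$. Then the exponential absorption parameter of $\nu$ equals $\theta_{0,S}$.
   Context: Let $D$ be a measurable space, $\partial\notin D$, and $(X_n)_{n\in\mathbb Z_+}$ a Markov chain on $D\cup\{\partial\}$ for which $\partial$ is absorbing; $\tau_\partial=\inf\{n\ge0: X_n=\partial\}$; $\mathbb P_x,\mathbb E_x$ denote law and expectation given $X_0=x$, and $\mathbb P_\mu=\int\mathbb P_x\,\mu(dx)$. The sub-Markovian semigroup is $S_nf(x)=\mathbb E_x(f(X_n)\mathbbm 1_{n<\tau_\partial})$, $\mu S_nf=\int S_nf\,d\mu$. Functions are extended by $0$ outside their domain. $\mathcal M_+(D)$: finite nonnegative measures on $D$. For measurable $W:D\to[1,\infty)$, $\mathcal M(W)$ is the space of finite signed measures with $|\mu|(W)<\infty$, norm $\|\mu\|_W=|\mu|(W)$; $\mathcal M_+(W)$ its nonnegative part; $L^\infty(W)$: measurable $f$ with $\|f\|_W=\sup|f|/W<\infty$. $\theta_S(\mu):=\inf\{\theta\ge0:\liminf_n\theta^{-n}\mu S_n\mathbbm 1_D=0\}$, $\theta_S(x)=\theta_S(\delta_x)$, $\theta_{0,S}=\sup_x\theta_S(x)$; $j_S(\mu):=\inf\{\ell\ge0:\liminf_n n^{-\ell}\theta_{0,S}^{-n}\mu S_n\mathbbm 1_D=0\}$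 (with $\inf\emptyset=0$), $j_S(x)=j_S(\delta_x)$. A quasi-stationary distribution (QSD) is a probability measure $\nu$ on $D$ with $\mathbb P_\nu(X_n\in\cdot\mid n<\tau_\partial)=\nu$ for all $n\ge0$; then there is $\theta\in(0,1]$ with $\mathbb P_\nu(n<\tau_\partial)=\theta^n$ for all $n$, i.e. $\nu S_n=\theta^n\nu$; $\theta$ is its exponential absorption (convergence) parameter. Assumption (A): $\theta_{0,S}\in(0,1]$, $j_S$ is integer valued, and there exist a measurable $W_S:D\to[1,\infty)$, a finite or countable set $I_S$, probability measures $\nu_{S,i}\in\mathcal M(W_S)$ and non-identically zero nonnegative $\eta_{S,i}\in L^\infty(W_S)$ ($i\in I_S$) with $\sum_{i}\eta_{S,i}\nu_{S,i}(W_S)\in L^\infty(W_S)$, and $\alpha_{S,n}\to0$, such that for all $f\in L^\infty(W_S)$, $n\ge1$, $x\in D$: $\big|\theta_{0,S}^{-n}n^{-j_S(x)}\mathbb E_x(f(X_n)\mathbbm 1_{n<\tau_\partial})-\sum_{i}\eta_{S,i}(x)\nu_{S,i}(f)\big|\le\alpha_{S,n}W_S(x)\|f\|_{W_S}$. Then $\eta_S:=\sum_{i\in I_S}\eta_{S,i}$. *)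

theory Defs
  imports "HOL-Probability.Probability"
begin

text \<open>Markov chain on the state space M (= D plus the cemetery point c), given by a
transition kernel K.  The n-step law of X_n under P_x is kstep M K n x.\<close>

primrec kstep :: "'a measure \<Rightarrow> ('a \<Rightarrow> 'a measure) \<Rightarrow> nat \<Rightarrow> 'a \<Rightarrow> 'a measure" where
  "kstep M K 0 x = return M x"
| "kstep M K (Suc n) x = bind (kstep M K n x) K"

definition markov_absorbing :: "'a measure \<Rightarrow> ('a \<Rightarrow> 'a measure) \<Rightarrow> 'a \<Rightarrow> bool" where
  "markov_absorbing M K c \<longleftrightarrow> K \<in> M \<rightarrow>\<^sub>M prob_algebra M \<and> c \<in> space M \<and> {c} \<in> sets M
     \<and> K c = return M c"

definition Dom :: "'a measure \<Rightarrow> 'a \<Rightarrow> 'a set" where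
  "Dom M c = space M - {c}"

text \<open>Sub-Markovian semigroup: S_n f(x) = E_x(f(X_n) 1_{n<tau}); since c is absorbing,
n < tau iff X_n is in D.\<close>
definition Sg :: "'a measure \<Rightarrow> ('a \<Rightarrow> 'a measure) \<Rightarrow> 'a \<Rightarrow> nat \<Rightarrow> ('a \<Rightarrow> real) \<Rightarrow> 'a \<Rightarrow> real" where
  "Sg M K c n f x = (\<integral>y. indicator (Dom M c) y * f y \<partial>(kstep M K n x))"

text \<open>mu S_n 1_D = P_mu(n < tau).\<close>
definition mass :: "'a measure \<Rightarrow> ('a \<Rightarrow> 'a measure) \<Rightarrow> 'a \<Rightarrow> 'a measure \<Rightarrow> nat \<Rightarrow> real" where
  "mass M K c \<mu> n = (\<integral>x. Sg M K c n (\<lambda>_. 1) x \<partial>\<mu>)"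

text \<open>theta_S(mu).  theta^{-n} for theta = 0 is read as +infinity; restricting to theta > 0
does not change the infimum.\<close>
definition thetaS :: "'a measure \<Rightarrow> ('a \<Rightarrow> 'a measure) \<Rightarrow> 'a \<Rightarrow> 'a measure \<Rightarrow> real" where
  "thetaS M K c \<mu> = Inf {\<theta>::real. \<theta> > 0 \<and>
      liminf (\<lambda>n. ereal (mass M K c \<mu> n / \<theta> ^ n)) = 0}"

definition theta0 :: "'a measure \<Rightarrow> ('a \<Rightarrow> 'a measure) \<Rightarrow> 'a \<Rightarrow> real" where
  "theta0 M K c = (SUP x\<in>Dom M c. thetaS M K c (return M x))"

definition jS :: "'a measure \<Rightarrow> ('a \<Rightarrow> 'a measure) \<Rightarrow> 'a \<Rightarrow> 'a measure \<Rightarrow> real" where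
  "jS M K c \<mu> = (let L = {l::real. l \<ge> 0 \<and>
      liminf (\<lambda>n. ereal (real n powr (-l) * mass M K c \<mu> n / theta0 M K c ^ n)) = 0}
     in if L = {} then 0 else Inf L)"

definition LinfW :: "'a measure \<Rightarrow> 'a \<Rightarrow> ('a \<Rightarrow> real) \<Rightarrow> ('a \<Rightarrow> real) \<Rightarrow> bool" where
  "LinfW M c W f \<longleftrightarrow> f \<in> borel_measurable M \<and> (\<exists>C. \<forall>x\<in>Dom M c. \<bar>f x\<bar> \<le> C * W x)"

definition normW :: "'a measure \<Rightarrow> 'a \<Rightarrow> ('a \<Rightarrow> real) \<Rightarrow> ('a \<Rightarrow> real) \<Rightarrow> real" where
  "normW M c W f = (SUP x\<in>Dom M c. \<bar>f x\<bar> / W x)"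

text \<open>M_+(W): finite nonnegative measures on D (measures on M charging no mass at c)
with mu(W) finite.\<close>
definition MplusW :: "'a measure \<Rightarrow> 'a \<Rightarrow> ('a \<Rightarrow> real) \<Rightarrow> 'a measure \<Rightarrow> bool" where
  "MplusW M c W \<mu> \<longleftrightarrow> sets \<mu> = sets M \<and> finite_measure \<mu> \<and> emeasure \<mu> {c} = 0
     \<and> (\<integral>\<^sup>+ x. ennreal (W x) \<partial>\<mu>) < \<infinity>"

text \<open>Quasi-stationary distribution: P_nu(X_n in A | n < tau) = nu(A) for all n.\<close>
definition qsd :: "'a measure \<Rightarrow> ('a \<Rightarrow> 'a measure) \<Rightarrow> 'a \<Rightarrow> 'a measure \<Rightarrow> bool" where
  "qsd M K c \<nu> \<longleftrightarrow> sets \<nu> = sets M \<and> prob_space \<nu> \<and> emeasure \<nu> {c} = 0 \<and>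
     (\<forall>n. mass M K c \<nu> n > 0 \<and>
        (\<forall>A\<in>sets M. A \<subseteq> Dom M c \<longrightarrow>
           (\<integral>x. Sg M K c n (indicator A) x \<partial>\<nu>) / mass M K c \<nu> n = measure \<nu> A))"

definition assumption_A :: "'a measure \<Rightarrow> ('a \<Rightarrow> 'a measure) \<Rightarrow> 'a \<Rightarrow> ('a \<Rightarrow> real) \<Rightarrow> 'i set
     \<Rightarrow> ('i \<Rightarrow> 'a measure) \<Rightarrow> ('i \<Rightarrow> 'a \<Rightarrow> real) \<Rightarrow> (nat \<Rightarrow> real) \<Rightarrow> bool" where
  "assumption_A M K c W I \<nu>s \<eta> \<alpha> \<longleftrightarrow>
     0 < theta0 M K c \<and> theta0 M K c \<le> 1 \<and>
     (\<forall>x\<in>Dom M c. \<exists>k::nat. jS M K c (return M x) = real k) \<and>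
     W \<in> borel_measurable M \<and> (\<forall>x\<in>Dom M c. 1 \<le> W x) \<and>
     countable I \<and>
     (\<forall>i\<in>I. prob_space (\<nu>s i) \<and> MplusW M c W (\<nu>s i)) \<and>
     (\<forall>i\<in>I. LinfW M c W (\<eta> i) \<and> (\<forall>x\<in>Dom M c. 0 \<le> \<eta> i x) \<and> (\<exists>x\<in>Dom M c. \<eta> i x \<noteq> 0)) \<and>
     LinfW M c W (\<lambda>x. infsum (\<lambda>i. \<eta> i x * (\<integral>y. W y \<partial>(\<nu>s i))) I) \<and>
     \<alpha> \<longlonglongrightarrow> 0 \<and>
     (\<forall>f n x. LinfW M c W f \<longrightarrow> 1 \<le> n \<longrightarrow> x \<in> Dom M c \<longrightarrow>
        integrable (kstep M K n x) (\<lambda>y. indicator (Dom M c) y * f y) \<and>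
        \<bar>inverse (theta0 M K c ^ n) * real n powr (- jS M K c (return M x)) * Sg M K c n f x
          - infsum (\<lambda>i. \<eta> i x * (\<integral>y. f y \<partial>(\<nu>s i))) I\<bar>
        \<le> \<alpha> n * W x * normW M c W f)"

definition etaS :: "'i set \<Rightarrow> ('i \<Rightarrow> 'a \<Rightarrow> real) \<Rightarrow> 'a \<Rightarrow> real" where
  "etaS I \<eta> x = infsum (\<lambda>i. \<eta> i x) I"

end

theory Submission imports Defs "HOL-Real_Asymp.Real_Asymp" begin

lemma kstep_meas:
  assumes "markov_absorbing M K c"
  shows "kstep M K n \<in> M \<rightarrow>\<^sub>M prob_algebra M"
proof (induction n)
  case 0
  have "kstep M K 0 = return M" by (rule ext) simp
  then show ?case by simp
next
  case (Suc n)
  have K: "K \<in> M \<rightarrow>\<^sub>M prob_algebra M" using assms by (simp add: markov_absorbing_def)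
  have "kstep M K (Suc n) = (\<lambda>x. bind (kstep M K n x) K)" by (rule ext) simp
  then show ?case using measurable_bind_prob_space[OF Suc K] by simp
qed

lemma kstep_space:
  assumes "markov_absorbing M K c" "x \<in> space M"
  shows "prob_space (kstep M K n x) \<and> sets (kstep M K n x) = sets M"
  using measurable_space[OF kstep_meas[OF assms(1)] assms(2)] by (simp add: space_prob_algebra)

lemma kstep_c:
  assumes "markov_absorbing M K c"
  shows "kstep M K n c = return M c"
proof (induction n)
  case (Suc n)
  have K: "K \<in> M \<rightarrow>\<^sub>M subprob_algebra M" using assms
    by (simp add: markov_absorbing_def measurable_prob_algebraD)
  have "c \<in> space M" using assms by (simp add: markov_absorbing_def)
  then show ?case using Suc bind_return[OF K] assms by (simp add: markov_absorbing_def)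
qed simp

lemma Dom_sets:
  assumes "markov_absorbing M K c"
  shows "Dom M c \<in> sets M"
  using assms unfolding markov_absorbing_def Dom_def by auto

lemma Sg_ind:
  assumes "markov_absorbing M K c" "x \<in> space M" "A \<in> sets M" "A \<subseteq> Dom M c"
  shows "Sg M K c n (indicator A) x = measure (kstep M K n x) A"
proof -
  have "Sg M K c n (indicator A) x = (\<integral>y. indicator A y \<partial>(kstep M K n x))"
    unfolding Sg_def using assms(4)
    by (intro Bochner_Integration.integral_cong) (auto simp: indicator_def)
  also have "\<dots> = measure (kstep M K n x) A"
    using kstep_space[OF assms(1,2)] assms(3) by simp
  finally show ?thesis .
qed

lemma Sg_one:
  assumes "markov_absorbing M K c" "x \<in> space M"
  shows "Sg M K c n (\<lambda>_. 1) x = measure (kstep M K n x) (Dom M c)"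
proof -
  have "Sg M K c n (\<lambda>_. 1) x = (\<integral>y. indicator (Dom M c) y \<partial>(kstep M K n x))"
    unfolding Sg_def by simp
  then show ?thesis using kstep_space[OF assms] Dom_sets[OF assms(1)] by simp
qed

lemma prob_emeq: "prob_space N \<Longrightarrow> emeasure N A = ennreal (measure N A)"
  by (metis prob_space_imp_subprob_space subprob_space.emeasure_subprob_space_less_top emeasure_eq_ennreal_measure less_irrefl)

lemma int_bind:
  assumes ch: "markov_absorbing M K c" and nu: "sets \<nu> = sets M" "prob_space \<nu>" and A: "A \<in> sets M"
  shows "(\<integral>x. measure (kstep M K n x) A \<partial>\<nu>) = measure (bind \<nu> (kstep M K n)) A"
proof -
  have km: "kstep M K n \<in> M \<rightarrow>\<^sub>M prob_algebra M" by (rule kstep_meas[OF ch])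
  have nsp: "\<nu> \<in> space (prob_algebra M)" using nu by (simp add: space_prob_algebra)
  have sp: "space \<nu> = space M" using nu(1) by (rule sets_eq_imp_space_eq)
  have meas: "(\<lambda>x. measure (kstep M K n x) A) \<in> borel_measurable \<nu>"
    using measurable_compose[OF measurable_prob_algebraD[OF km] measurable_measure_subprob_algebra[OF A]]
      measurable_cong_sets[OF nu(1) refl] by blast
  interpret nu: prob_space \<nu> by fact
  have int: "integrable \<nu> (\<lambda>x. measure (kstep M K n x) A)"
    by (rule nu.integrable_const_bound[where B=1]) (auto simp: meas sp kstep_space[OF ch] prob_space.prob_le_1)
  have "emeasure (bind \<nu> (kstep M K n)) A = (\<integral>\<^sup>+x. emeasure (kstep M K n x) A \<partial>\<nu>)"
    by (rule emeasure_bind_prob_algebra[OF nsp km A])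
  also have "\<dots> = (\<integral>\<^sup>+x. ennreal (measure (kstep M K n x) A) \<partial>\<nu>)"
    by (intro nn_integral_cong) (simp add: sp kstep_space[OF ch] prob_emeq)
  also have "\<dots> = ennreal (\<integral>x. measure (kstep M K n x) A \<partial>\<nu>)"
    by (rule nn_integral_eq_integral[OF int]) simp
  finally have e: "emeasure (bind \<nu> (kstep M K n)) A = ennreal (\<integral>x. measure (kstep M K n x) A \<partial>\<nu>)" .
  have "prob_space (bind \<nu> (kstep M K n))" by (rule prob_space_bind'[OF nsp km])
  then have "emeasure (bind \<nu> (kstep M K n)) A = ennreal (measure (bind \<nu> (kstep M K n)) A)"
    by (simp add: prob_emeq)
  with e show ?thesis
    by (metis Bochner_Integration.integral_nonneg ennreal_inj measure_nonneg)
qed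

lemma mass_mult:
  assumes ch: "markov_absorbing M K c" and q: "qsd M K c \<nu>"
  shows "mass M K c \<nu> n = mass M K c \<nu> 1 ^ n"
proof -
  define D where "D = Dom M c"
  define P where "P n = bind \<nu> (kstep M K n)" for n
  have nu: "sets \<nu> = sets M" "prob_space \<nu>" "emeasure \<nu> {c} = 0" using q by (auto simp: qsd_def)
  interpret nu: prob_space \<nu> by fact
  have sp: "space \<nu> = space M" using nu(1) by (rule sets_eq_imp_space_eq)
  have Ds: "D \<in> sets M" using Dom_sets[OF ch] by (simp add: D_def)
  have cs: "c \<in> space M" "{c} \<in> sets M" and Kc: "K c = return M c"
    and K: "K \<in> M \<rightarrow>\<^sub>M prob_algebra M" using ch by (auto simp: markov_absorbing_def)
  have nsp: "\<nu> \<in> space (prob_algebra M)" using nu by (simp add: space_prob_algebra)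
  have km: "\<And>n. kstep M K n \<in> M \<rightarrow>\<^sub>M prob_algebra M" by (rule kstep_meas[OF ch])
  have Psp: "P n \<in> space (prob_algebra M)" for n
    using prob_space_bind'[OF nsp km] sets_bind'[OF nsp km] by (simp add: P_def space_prob_algebra)
  have a: "mass M K c \<nu> n = measure (P n) D" for n
  proof -
    have "mass M K c \<nu> n = (\<integral>x. measure (kstep M K n x) D \<partial>\<nu>)"
      unfolding mass_def D_def by (intro Bochner_Integration.integral_cong) (auto simp: sp Sg_one[OF ch])
    then show ?thesis using int_bind[OF ch nu(1,2) Ds] by (simp add: P_def)
  qed
  have mpos: "mass M K c \<nu> n > 0" for n using q by (simp add: qsd_def)
  have b: "measure (P n) A = mass M K c \<nu> n * measure \<nu> A" if "A \<in> sets M" "A \<subseteq> D" for n A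
  proof -
    have "(\<integral>x. Sg M K c n (indicator A) x \<partial>\<nu>) / mass M K c \<nu> n = measure \<nu> A"
      using q that by (auto simp: qsd_def D_def)
    moreover have "(\<integral>x. Sg M K c n (indicator A) x \<partial>\<nu>) = measure (P n) A"
    proof -
      have "(\<integral>x. Sg M K c n (indicator A) x \<partial>\<nu>) = (\<integral>x. measure (kstep M K n x) A \<partial>\<nu>)"
        using that by (intro Bochner_Integration.integral_cong) (auto simp: sp Sg_ind[OF ch] D_def)
      then show ?thesis using int_bind[OF ch nu(1,2) that(1)] by (simp add: P_def)
    qed
    ultimately show ?thesis using mpos[of n] by (simp add: field_simps)
  qed
  have c: "mass M K c \<nu> (Suc n) = mass M K c \<nu> n * mass M K c \<nu> 1" for n
  proof -
    define g where "g y = emeasure (K y) D" for y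
    have gm: "g \<in> borel_measurable M" unfolding g_def
      using measurable_compose[OF measurable_prob_algebraD[OF K] measurable_emeasure_subprob_algebra[OF Ds]] .
    have Kd: "K \<in> M \<rightarrow>\<^sub>M subprob_algebra M" using K by (rule measurable_prob_algebraD)
    have kd: "kstep M K n \<in> M \<rightarrow>\<^sub>M subprob_algebra M" using km by (rule measurable_prob_algebraD)
    have Psets: "sets (P k) = sets M" for k using Psp[of k] by (simp add: space_prob_algebra)
    have Pspace: "space (P k) = space M" for k using Psets by (rule sets_eq_imp_space_eq)
    have PS: "P (Suc n) = bind (P n) K"
    proof -
      have kd': "kstep M K n \<in> \<nu> \<rightarrow>\<^sub>M subprob_algebra M"
        using kd measurable_cong_sets[OF nu(1) refl] by blast
      have "kstep M K (Suc n) = (\<lambda>x. bind (kstep M K n x) K)" by (rule ext) simp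
      then show ?thesis unfolding P_def using bind_assoc[OF kd' Kd] by simp
    qed
    have P1: "P 1 = bind \<nu> K"
      unfolding P_def by (intro bind_cong) (auto simp: sp bind_return[OF Kd])
    have Dm: "(indicator D :: _ \<Rightarrow> ennreal) \<in> borel_measurable (P k)" for k
      using Ds Psets by (simp add: measurable_cong_sets[OF Psets refl])
    have Dnu: "D \<in> sets \<nu>" using Ds nu(1) by simp
    have dm2: "(\<lambda>y. ennreal (mass M K c \<nu> n) * indicator D y) \<in> borel_measurable \<nu>"
      using Dnu by measurable
    have dens: "density (P n) (indicator D) = density \<nu> (\<lambda>y. ennreal (mass M K c \<nu> n) * indicator D y)"
    proof (rule measure_eqI)
      show "sets (density (P n) (indicator D)) = sets (density \<nu> (\<lambda>y. ennreal (mass M K c \<nu> n) * indicator D y))"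
        by (simp add: Psets nu(1))
    next
      fix A assume "A \<in> sets (density (P n) (indicator D))"
      then have A: "A \<in> sets M" by (simp add: Psets)
      have DA: "D \<inter> A \<in> sets M" using A Ds by auto
      have "emeasure (density (P n) (indicator D)) A = emeasure (P n) (D \<inter> A)"
      proof -
        have "emeasure (density (P n) (indicator D)) A = (\<integral>\<^sup>+y. indicator (D \<inter> A) y \<partial>P n)"
          using A Dm by (subst emeasure_density) (auto simp: Psets indicator_inter_arith intro!: nn_integral_cong)
        then show ?thesis using DA by (simp add: Psets)
      qed
      also have "\<dots> = ennreal (mass M K c \<nu> n * measure \<nu> (D \<inter> A))"
        using b[OF DA] Psp[of n] by (simp add: space_prob_algebra prob_emeq)
      also have "\<dots> = ennreal (mass M K c \<nu> n) * emeasure \<nu> (D \<inter> A)"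
        using mpos[of n] by (simp add: ennreal_mult nu.emeasure_eq_measure)
      also have "\<dots> = emeasure (density \<nu> (\<lambda>y. ennreal (mass M K c \<nu> n) * indicator D y)) A"
      proof -
        have "emeasure (density \<nu> (\<lambda>y. ennreal (mass M K c \<nu> n) * indicator D y)) A
            = (\<integral>\<^sup>+y. ennreal (mass M K c \<nu> n) * indicator (D \<inter> A) y \<partial>\<nu>)"
          using A Ds dm2 by (subst emeasure_density) (auto simp: nu(1) indicator_inter_arith mult.assoc intro!: nn_integral_cong)
        also have "\<dots> = ennreal (mass M K c \<nu> n) * emeasure \<nu> (D \<inter> A)"
          using DA by (simp add: nu(1) nn_integral_cmult_indicator)
        finally show ?thesis by simp
      qed
      finally show "emeasure (density (P n) (indicator D)) A
          = emeasure (density \<nu> (\<lambda>y. ennreal (mass M K c \<nu> n) * indicator D y)) A" .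
    qed
    have aeD: "AE y in \<nu>. y \<in> D"
    proof -
      have "{c} \<in> null_sets \<nu>" using nu cs by (auto intro: null_setsI)
      from AE_not_in[OF this] AE_space show ?thesis
        by eventually_elim (use sp in \<open>auto simp: D_def Dom_def\<close>)
    qed
    have "emeasure (P (Suc n)) D = (\<integral>\<^sup>+y. g y \<partial>P n)"
      unfolding PS g_def by (rule emeasure_bind_prob_algebra[OF Psp K Ds])
    also have "\<dots> = (\<integral>\<^sup>+y. indicator D y * g y \<partial>P n)"
    proof (intro nn_integral_cong)
      fix y assume "y \<in> space (P n)"
      then have "y \<in> space M" by (simp add: Pspace)
      then show "g y = indicator D y * g y"
        using Ds by (cases "y = c") (auto simp: g_def Kc D_def Dom_def emeasure_return)
    qed
    also have "\<dots> = (\<integral>\<^sup>+y. g y \<partial>density (P n) (indicator D))"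
    proof -
      have "g \<in> borel_measurable (P n)" using gm measurable_cong_sets[OF Psets refl] by blast
      then show ?thesis using Dm[of n] by (simp add: nn_integral_density[symmetric])
    qed
    also have "\<dots> = (\<integral>\<^sup>+y. g y \<partial>density \<nu> (\<lambda>y. ennreal (mass M K c \<nu> n) * indicator D y))"
      by (simp add: dens)
    also have "\<dots> = (\<integral>\<^sup>+y. ennreal (mass M K c \<nu> n) * (indicator D y * g y) \<partial>\<nu>)"
      using Ds gm dm2 by (subst nn_integral_density) (auto simp: nu(1) measurable_cong_sets[OF nu(1) refl] mult.assoc)
    also have "\<dots> = ennreal (mass M K c \<nu> n) * (\<integral>\<^sup>+y. indicator D y * g y \<partial>\<nu>)"
      using Ds gm by (subst nn_integral_cmult) (auto simp: measurable_cong_sets[OF nu(1) refl])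
    also have "(\<integral>\<^sup>+y. indicator D y * g y \<partial>\<nu>) = (\<integral>\<^sup>+y. g y \<partial>\<nu>)"
      by (intro nn_integral_cong_AE) (use aeD in \<open>eventually_elim, simp\<close>)
    also have "(\<integral>\<^sup>+y. g y \<partial>\<nu>) = emeasure (P 1) D"
      unfolding P1 g_def by (rule emeasure_bind_prob_algebra[OF nsp K Ds, symmetric])
    finally have e: "emeasure (P (Suc n)) D = ennreal (mass M K c \<nu> n) * emeasure (P 1) D" .
    have pe: "emeasure (P k) D = ennreal (mass M K c \<nu> k)" for k
      using Psp[of k] a[of k] by (simp add: space_prob_algebra prob_emeq)
    have "ennreal (mass M K c \<nu> (Suc n)) = ennreal (mass M K c \<nu> n * mass M K c \<nu> 1)"
      using e pe mpos[of 1] by (simp add: ennreal_mult'')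
    then show ?thesis using mpos[of n] mpos[of 1] mpos[of "Suc n"] by (simp add: ennreal_inj)
  qed
  show ?thesis
  proof (induction n)
    case 0
    have "P 0 = \<nu>" unfolding P_def
    proof -
      have "kstep M K 0 = return M" by (rule ext) simp
      then show "bind \<nu> (kstep M K 0) = \<nu>" using bind_return''[OF nu(1)] by simp
    qed
    moreover have "measure \<nu> D = 1"
      using nu.prob_compl[OF cs(2)[folded nu(1)]] nu(3) sp
      by (simp add: D_def Dom_def nu.emeasure_eq_measure)
    ultimately show ?case using a by simp
  next
    case (Suc n)
    have "mass M K c \<nu> (Suc n) = mass M K c \<nu> n * mass M K c \<nu> 1" by (rule c)
    then show ?case by (simp only: Suc.IH power_Suc mult.commute)
  qed
qed

lemma low_pt:
  fixes t p a e b :: real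
  assumes "\<bar>t * p * a - e\<bar> \<le> b" "0 < p" "p \<le> 1" "0 \<le> t * a"
  shows "e - b \<le> t * a"
proof -
  have "t * p * a = p * (t * a)" by simp
  also have "\<dots> \<le> t * a" using assms(3,4) mult_right_mono[of p 1 "t*a"] by simp
  finally show ?thesis using assms(1) by linarith
qed

lemma up_pt:
  fixes t p a e b q :: real
  assumes "\<bar>t * p * a - e\<bar> \<le> b" "0 < p" "0 \<le> t * a" "1 \<le> q * p" "0 \<le> q"
  shows "t * a \<le> q * (e + b)"
proof -
  have "t * a \<le> (q * p) * (t * a)" using assms(3,4) mult_right_mono[of 1 "q*p" "t*a"] by simp
  also have "\<dots> = q * (t * p * a)" by simp
  also have "\<dots> \<le> q * (e + b)" using assms(1,5) by (intro mult_left_mono) auto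
  finally show ?thesis .
qed

theorem proposition2p2:
  fixes M :: "'a measure" and K :: "'a \<Rightarrow> 'a measure" and c :: 'a
    and W :: "'a \<Rightarrow> real" and I :: "'i set" and \<nu>s :: "'i \<Rightarrow> 'a measure"
    and \<eta> :: "'i \<Rightarrow> 'a \<Rightarrow> real" and \<alpha> :: "nat \<Rightarrow> real" and \<nu> :: "'a measure"
  assumes chain: "markov_absorbing M K c"
    and A: "assumption_A M K c W I \<nu>s \<eta> \<alpha>"
    and nuW: "MplusW M c W \<nu>"
    and nu_qsd: "qsd M K c \<nu>"
    and nu_eta: "(\<integral>x. etaS I \<eta> x \<partial>\<nu>) > 0"
    and nu_j: "\<exists>l::real. l \<ge> 0 \<and> measure \<nu> {x \<in> Dom M c. jS M K c (return M x) \<le> l} = 1"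
  shows "\<forall>n. mass M K c \<nu> n = theta0 M K c ^ n"
proof -
  define D where "D = Dom M c"
  define th0 where "th0 = theta0 M K c"
  define th where "th = mass M K c \<nu> 1"
  define N where "N = normW M c W (\<lambda>_. 1)"
  define E where "E = etaS I \<eta>"
  define s where "s n x = Sg M K c n (\<lambda>_. 1) x" for n x
  define j where "j x = jS M K c (return M x)" for x
  have nu: "sets \<nu> = sets M" "prob_space \<nu>" "emeasure \<nu> {c} = 0" using nu_qsd by (auto simp: qsd_def)
  interpret nu: prob_space \<nu> by fact
  have sp: "space \<nu> = space M" using nu(1) by (rule sets_eq_imp_space_eq)
  have Ds: "D \<in> sets M" using Dom_sets[OF chain] by (simp add: D_def)
  have cs: "c \<in> space M" "{c} \<in> sets M" using chain by (auto simp: markov_absorbing_def)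
  note AA = A[unfolded assumption_A_def]
  have Aparts: "0 < theta0 M K c" "theta0 M K c \<le> 1"
     "\<forall>x\<in>Dom M c. \<exists>k::nat. jS M K c (return M x) = real k"
     "W \<in> borel_measurable M" "\<forall>x\<in>Dom M c. 1 \<le> W x"
     "\<forall>i\<in>I. prob_space (\<nu>s i) \<and> MplusW M c W (\<nu>s i)" "\<alpha> \<longlonglongrightarrow> 0"
    using AA[THEN conjunct1] AA[THEN conjunct2, THEN conjunct1] AA[THEN conjunct2, THEN conjunct2, THEN conjunct1] AA[THEN conjunct2, THEN conjunct2, THEN conjunct2, THEN conjunct1] AA[THEN conjunct2, THEN conjunct2, THEN conjunct2, THEN conjunct2, THEN conjunct1] AA[THEN conjunct2, THEN conjunct2, THEN conjunct2, THEN conjunct2, THEN conjunct2, THEN conjunct2, THEN conjunct1] AA[THEN conjunct2, THEN conjunct2, THEN conjunct2, THEN conjunct2, THEN conjunct2, THEN conjunct2, THEN conjunct2, THEN conjunct2, THEN conjunct2, THEN conjunct1] .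
  have th0: "0 < th0" "th0 \<le> 1" using Aparts(1,2) by (simp_all add: th0_def)
  have jD: "0 \<le> j x" if xD: "x \<in> D" for x
  proof -
    obtain k :: nat where "jS M K c (return M x) = real k" using Aparts(3) xD by (auto simp: D_def)
    then show ?thesis by (simp add: j_def)
  qed
  have Wm: "W \<in> borel_measurable M" using Aparts(4) .
  have W1: "\<And>x. x \<in> D \<Longrightarrow> 1 \<le> W x" using Aparts(5) by (simp add: D_def)
  have \<alpha>0: "\<alpha> \<longlonglongrightarrow> 0" using Aparts(7) .
  have nusp: "\<And>i. i \<in> I \<Longrightarrow> prob_space (\<nu>s i)" using Aparts(6) by simp
  have L1: "LinfW M c W (\<lambda>_. 1)" unfolding LinfW_def
    using W1 by (intro conjI exI[of _ 1]) (auto simp: D_def)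
  have bound: "\<bar>inverse (th0 ^ n) * real n powr (- j x) * s n x - E x\<bar> \<le> \<alpha> n * N * W x"
    if "x \<in> D" "1 \<le> n" for x n
  proof -
    have "\<bar>inverse (th0 ^ n) * real n powr (- j x) * s n x
          - infsum (\<lambda>i. \<eta> i x * (\<integral>y. 1 \<partial>(\<nu>s i))) I\<bar> \<le> \<alpha> n * W x * N"
    proof -
      have "\<forall>f n x. LinfW M c W f \<longrightarrow> 1 \<le> n \<longrightarrow> x \<in> Dom M c \<longrightarrow>
        integrable (kstep M K n x) (\<lambda>y. indicator (Dom M c) y * f y) \<and>
        \<bar>inverse (theta0 M K c ^ n) * real n powr (- jS M K c (return M x)) * Sg M K c n f x
          - infsum (\<lambda>i. \<eta> i x * (\<integral>y. f y \<partial>(\<nu>s i))) I\<bar>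
        \<le> \<alpha> n * W x * normW M c W f"
        by (rule AA[THEN conjunct2, THEN conjunct2, THEN conjunct2, THEN conjunct2, THEN conjunct2, THEN conjunct2, THEN conjunct2, THEN conjunct2, THEN conjunct2, THEN conjunct2])
      then have "\<bar>inverse (theta0 M K c ^ n) * real n powr (- jS M K c (return M x)) * Sg M K c n (\<lambda>_. 1) x
          - infsum (\<lambda>i. \<eta> i x * (\<integral>y. 1 \<partial>(\<nu>s i))) I\<bar>
        \<le> \<alpha> n * W x * normW M c W (\<lambda>_. 1)"
        using L1 that unfolding D_def by blast
      then show ?thesis unfolding th0_def j_def s_def N_def .
    qed
    moreover have "infsum (\<lambda>i. \<eta> i x * (\<integral>y. 1 \<partial>(\<nu>s i))) I = E x"
      unfolding E_def etaS_def by (intro infsum_cong) (simp add: nusp prob_space.prob_space)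
    ultimately show ?thesis by (simp add: mult_ac)
  qed
  have aeD: "AE y in \<nu>. y \<in> D"
  proof -
    have "{c} \<in> null_sets \<nu>" using nu cs by (auto intro: null_setsI)
    from AE_not_in[OF this] AE_space show ?thesis
      by eventually_elim (use sp in \<open>auto simp: D_def Dom_def\<close>)
  qed
  obtain l where l: "l \<ge> 0" "measure \<nu> {x \<in> Dom M c. jS M K c (return M x) \<le> l} = 1"
    using nu_j by blast
  have aej: "AE x in \<nu>. j x \<le> l"
    using nu.AE_prob_1[OF l(2)] by eventually_elim (simp add: j_def)
  have s_eq: "s n x = measure (kstep M K n x) D" if "x \<in> space M" for n x
    using Sg_one[OF chain that] by (simp add: s_def D_def)
  have s_ge: "0 \<le> s n x" if "x \<in> space M" for n x using s_eq[OF that] by simp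
  have sI: "integrable \<nu> (s n)" for n
  proof -
    have meas: "(\<lambda>x. measure (kstep M K n x) D) \<in> borel_measurable \<nu>"
      using measurable_compose[OF measurable_prob_algebraD[OF kstep_meas[OF chain]] measurable_measure_subprob_algebra[OF Ds]]
        measurable_cong_sets[OF nu(1) refl] by blast
    have "integrable \<nu> (\<lambda>x. measure (kstep M K n x) D)"
      by (rule nu.integrable_const_bound[where B=1]) (auto simp: meas sp kstep_space[OF chain] prob_space.prob_le_1)
    moreover have "integrable \<nu> (s n) = integrable \<nu> (\<lambda>x. measure (kstep M K n x) D)"
      by (rule Bochner_Integration.integrable_cong) (auto simp: sp s_eq)
    ultimately show ?thesis by simp
  qed
  have EI: "integrable \<nu> E"
  proof (rule ccontr)
    assume "\<not> integrable \<nu> E"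
    then have "(\<integral>x. E x \<partial>\<nu>) = 0" by (rule not_integrable_integral_eq)
    then show False using nu_eta unfolding E_def by linarith
  qed
  have WI: "integrable \<nu> W"
  proof (rule integrableI_nonneg)
    show "W \<in> borel_measurable \<nu>" using Wm measurable_cong_sets[OF nu(1) refl] by blast
    show "AE x in \<nu>. 0 \<le> W x" using aeD
    proof eventually_elim
      case (elim x) show ?case using W1[OF elim] by linarith
    qed
    show "(\<integral>\<^sup>+x. ennreal (W x) \<partial>\<nu>) < \<infinity>" using nuW by (simp add: MplusW_def)
  qed
  have massn: "mass M K c \<nu> n = th ^ n" for n unfolding th_def by (rule mass_mult[OF chain nu_qsd])
  have thpos: "0 < th" using nu_qsd by (simp add: qsd_def th_def)
  define t where "t = th / th0"
  have tpos: "0 < t" using thpos th0 by (simp add: t_def)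
  have tn: "t ^ n = (\<integral>x. inverse (th0 ^ n) * s n x \<partial>\<nu>)" for n
  proof -
    have e1: "(\<integral>x. inverse (th0 ^ n) * s n x \<partial>\<nu>) = inverse (th0 ^ n) * (\<integral>x. s n x \<partial>\<nu>)"
      by (rule integral_mult_right_zero)
    have e2: "(\<integral>x. s n x \<partial>\<nu>) = mass M K c \<nu> n" by (simp add: mass_def s_def)
    show ?thesis unfolding e1 e2 massn t_def by (simp add: power_divide field_simps)
  qed
  define c1 where "c1 = (\<integral>x. E x \<partial>\<nu>)"
  define c2 where "c2 = N * (\<integral>x. W x \<partial>\<nu>)"
  have c1: "0 < c1" using nu_eta by (simp add: c1_def E_def)
  have lowI: "c1 - \<alpha> n * c2 \<le> t ^ n" if "1 \<le> n" for n
  proof -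
    have "(\<integral>x. E x - \<alpha> n * N * W x \<partial>\<nu>) \<le> (\<integral>x. inverse (th0 ^ n) * s n x \<partial>\<nu>)"
    proof (rule integral_mono_AE)
      show "integrable \<nu> (\<lambda>x. E x - \<alpha> n * N * W x)" using EI WI by auto
      show "integrable \<nu> (\<lambda>x. inverse (th0 ^ n) * s n x)" using sI by auto
      show "AE x in \<nu>. E x - \<alpha> n * N * W x \<le> inverse (th0 ^ n) * s n x"
        using aeD
      proof eventually_elim
        case (elim x)
        have xs: "x \<in> space M" using elim by (simp add: D_def Dom_def)
        show ?case
        proof (rule low_pt[OF bound[OF elim that]])
          show "0 < real n powr - j x" using that by simp
          show "real n powr - j x \<le> 1" using that jD[OF elim] by (simp add: powr_minus_divide ge_one_powr_ge_zero)
          show "0 \<le> inverse (th0 ^ n) * s n x" using th0 s_ge[OF xs] by simp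
        qed
      qed
    qed
    then show ?thesis using EI WI by (simp add: tn c1_def c2_def mult_ac)
  qed
  have upI: "t ^ n \<le> real n powr l * (c1 + \<alpha> n * c2)" if "1 \<le> n" for n
  proof -
    have "(\<integral>x. inverse (th0 ^ n) * s n x \<partial>\<nu>) \<le> (\<integral>x. real n powr l * (E x + \<alpha> n * N * W x) \<partial>\<nu>)"
    proof (rule integral_mono_AE)
      show "integrable \<nu> (\<lambda>x. real n powr l * (E x + \<alpha> n * N * W x))" using EI WI by auto
      show "integrable \<nu> (\<lambda>x. inverse (th0 ^ n) * s n x)" using sI by auto
      show "AE x in \<nu>. inverse (th0 ^ n) * s n x \<le> real n powr l * (E x + \<alpha> n * N * W x)"
        using aeD aej
      proof eventually_elim
        case (elim x)
        have xs: "x \<in> space M" using elim by (simp add: D_def Dom_def)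
        show ?case
        proof (rule up_pt[OF bound[OF elim(1) that]])
          show "0 < real n powr - j x" using that by simp
          have "real n powr l * real n powr - j x = real n powr (l - j x)"
            by (simp add: powr_add[symmetric])
          then show "1 \<le> real n powr l * real n powr - j x" using that elim(2)
            by (simp add: ge_one_powr_ge_zero)
          show "0 \<le> inverse (th0 ^ n) * s n x" using th0 s_ge[OF xs] by simp
        qed simp
      qed
    qed
    then show ?thesis using EI WI by (simp add: tn c1_def c2_def mult_ac)
  qed
  have ge1: "1 \<le> t"
  proof (rule ccontr)
    assume "\<not> 1 \<le> t"
    then have "(\<lambda>n. t ^ n) \<longlonglongrightarrow> 0" using tpos by (intro LIMSEQ_power_zero) auto
    moreover have "(\<lambda>n. c1 - \<alpha> n * c2) \<longlonglongrightarrow> c1 - 0 * c2"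
      by (intro tendsto_intros \<alpha>0)
    ultimately have "c1 - 0 * c2 \<le> 0"
      using lowI by (intro LIMSEQ_le[of "\<lambda>n. c1 - \<alpha> n * c2" _ "\<lambda>n. t ^ n"]) auto
    then show False using c1 by simp
  qed
  have le1: "t \<le> 1"
  proof (rule ccontr)
    assume "\<not> t \<le> 1"
    then have t1: "1 < t" by simp
    have "(\<lambda>n. real n powr l / t ^ n) \<longlonglongrightarrow> 0" using t1 by real_asymp
    moreover have "(\<lambda>n. c1 + \<alpha> n * c2) \<longlonglongrightarrow> c1 + 0 * c2"
      by (intro tendsto_intros \<alpha>0)
    ultimately have lim: "(\<lambda>n. real n powr l / t ^ n * (c1 + \<alpha> n * c2)) \<longlonglongrightarrow> 0 * (c1 + 0 * c2)"
      by (intro tendsto_mult)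
    have "\<forall>n\<ge>1. 1 \<le> real n powr l / t ^ n * (c1 + \<alpha> n * c2)"
    proof (intro allI impI)
      fix n :: nat assume "1 \<le> n"
      from upI[OF this] have "t ^ n \<le> real n powr l * (c1 + \<alpha> n * c2)" .
      then show "1 \<le> real n powr l / t ^ n * (c1 + \<alpha> n * c2)" using tpos
        by (simp add: field_simps)
    qed
    then have "1 \<le> 0 * (c1 + 0 * c2)"
      using lim by (intro LIMSEQ_le[of "\<lambda>_. 1" 1]) auto
    then show False by simp
  qed
  have "th = th0" using ge1 le1 th0 by (simp add: t_def field_simps)
  then show ?thesis using massn by (simp add: th0_def)
qed

end
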